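(* Let $G$ be a network with three sources $s_1,s_2,s_3$ and three terminals $t_1,t_2,t_3$ such that every pair $(s_i,t_j)$ is connected by a directed path. If $G$ contains a vertex $v$ with $(c_s(v),c_t(v))\in\{(3,3),(2,3),(3,2)\}$, then for every finite field $\mathbb{F}$ there exists a linear network code over $\mathbb{F}$ under which every terminal recovers $X_1+X_2+X_3$.
   Context: A network is a finite directed acyclic graph (parallel edges allowed), every edge of unit capacity carrying one symbol of a finite field $\mathbb{F}$. Sources have no incoming edges; source $s_i$ holds $X_i\in\mathbb{F}$ (independent, uniform). Terminals have no outgoing edges. In a linear network code each edge leaving a non-source vertex carries an $\mathbb{F}$-linear combination of the symbols on the edges entering its tail; an edge leaving a source carries a multiple of its symbol. For a vertex $v$, $c_s(v)$ is the number of sources $s_i$ with a directed path from $s_i$ to $v$ (a vertex reaches itself), and $c_t(v)$ is the number of terminals $t_j$ with a directed path from $v$ to $t_j$; the pair $(c_s(v),c_t(v))$ is the type of $v$. *)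

theory Defs
  imports Main
begin

text \<open>A network: finite vertex set V, finite edge set E (parallel edges allowed, since
edges are abstract identifiers), tail/head maps, acyclic.\<close>

definition arcs :: "'e set \<Rightarrow> ('e \<Rightarrow> 'v) \<Rightarrow> ('e \<Rightarrow> 'v) \<Rightarrow> ('v \<times> 'v) set" where
  "arcs E tail head = {(tail e, head e) | e. e \<in> E}"

definition network :: "'v set \<Rightarrow> 'e set \<Rightarrow> ('e \<Rightarrow> 'v) \<Rightarrow> ('e \<Rightarrow> 'v) \<Rightarrow> bool" where
  "network V E tail head \<longleftrightarrow> finite V \<and> finite E \<and> (\<forall>e\<in>E. tail e \<in> V \<and> head e \<in> V)
     \<and> acyclic (arcs E tail head)"

definition has_path :: "'e set \<Rightarrow> ('e \<Rightarrow> 'v) \<Rightarrow> ('e \<Rightarrow> 'v) \<Rightarrow> 'v \<Rightarrow> 'v \<Rightarrow> bool" where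
  "has_path E tail head u v \<longleftrightarrow> (u, v) \<in> (arcs E tail head)\<^sup>*"

text \<open>Sources s 0..s(n-1), terminals t 0..t(m-1).\<close>
definition c_s :: "'e set \<Rightarrow> ('e \<Rightarrow> 'v) \<Rightarrow> ('e \<Rightarrow> 'v) \<Rightarrow> nat \<Rightarrow> (nat \<Rightarrow> 'v) \<Rightarrow> 'v \<Rightarrow> nat" where
  "c_s E tail head n s v = card {i. i < n \<and> has_path E tail head (s i) v}"

definition c_t :: "'e set \<Rightarrow> ('e \<Rightarrow> 'v) \<Rightarrow> ('e \<Rightarrow> 'v) \<Rightarrow> nat \<Rightarrow> (nat \<Rightarrow> 'v) \<Rightarrow> 'v \<Rightarrow> nat" where
  "c_t E tail head m t v = card {j. j < m \<and> has_path E tail head v (t j)}"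

text \<open>Linear network code over the field 'a: local coefficients alpha (source edges) and
beta (edge-to-edge), together with the induced edge messages msg e X as functions of the
source symbols X (X i is the symbol of source s i). Since the network is acyclic, msg is
uniquely determined by the coefficients.\<close>
definition is_linear_code ::
  "'e set \<Rightarrow> ('e \<Rightarrow> 'v) \<Rightarrow> ('e \<Rightarrow> 'v) \<Rightarrow> nat \<Rightarrow> (nat \<Rightarrow> 'v) \<Rightarrow>
   ('e \<Rightarrow> 'a::field) \<Rightarrow> ('e \<Rightarrow> 'e \<Rightarrow> 'a) \<Rightarrow> ('e \<Rightarrow> (nat \<Rightarrow> 'a) \<Rightarrow> 'a) \<Rightarrow> bool" where
  "is_linear_code E tail head n s alpha beta msg \<longleftrightarrow>
     (\<forall>X. \<forall>e\<in>E.
        (\<forall>i<n. tail e = s i \<longrightarrow> msg e X = alpha e * X i) \<and>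
        ((\<forall>i<n. tail e \<noteq> s i) \<longrightarrow>
           msg e X = (\<Sum>e'\<in>{e'\<in>E. head e' = tail e}. beta e' e * msg e' X)))"

definition recovers_sum ::
  "'e set \<Rightarrow> ('e \<Rightarrow> 'v) \<Rightarrow> nat \<Rightarrow> ('e \<Rightarrow> (nat \<Rightarrow> 'a::field) \<Rightarrow> 'a) \<Rightarrow> 'v \<Rightarrow> bool" where
  "recovers_sum E head n msg w \<longleftrightarrow>
     (\<exists>delta. \<forall>X. (\<Sum>e\<in>{e\<in>E. head e = w}. delta e * msg e X) = (\<Sum>i<n. X i))"

end

theory Submission
  imports Defs
begin


lemma func_comparable:
  assumes fn: "\<And>p q q'. (p,q)\<in>R \<Longrightarrow> (p,q')\<in>R \<Longrightarrow> q=q'"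
    and "(x,a)\<in>R\<^sup>*" and "(x,b)\<in>R\<^sup>*"
  shows "(a,b)\<in>R\<^sup>* \<or> (b,a)\<in>R\<^sup>*"
  using assms(2)
proof (induction rule: rtrancl_induct)
  case base
  then show ?case using assms(3) by blast
next
  case (step y z)
  from step.IH show ?case
  proof
    assume yb: "(y,b)\<in>R\<^sup>*"
    show ?thesis
    proof (cases "y = b")
      case True then show ?thesis using step.hyps(2) by blast
    next
      case False
      then have tc: "(y,b)\<in>R\<^sup>+" using rtranclD[OF yb] False by blast
      obtain c where "(y,c)\<in>R" "(c,b)\<in>R\<^sup>*" using tranclD[OF tc] by blast
      then show ?thesis using fn[OF step.hyps(2)] by blast
    qed
  next
    assume "(b,y)\<in>R\<^sup>*"
    then show ?thesis using step.hyps(2) by (blast intro: rtrancl_into_rtrancl)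
  qed
qed

locale netw =
  fixes E :: "'e set" and tail head :: "'e \<Rightarrow> 'v"
  assumes finE: "finite E" and acyc: "acyclic (arcs E tail head)"
begin

abbreviation "rE \<equiv> arcs E tail head"

lemma arcs_iff: "(p,q) \<in> arcs T tail head \<longleftrightarrow> (\<exists>e\<in>T. tail e = p \<and> head e = q)"
  unfolding arcs_def by blast

lemma arcs_mono: "T \<subseteq> E \<Longrightarrow> arcs T tail head \<subseteq> rE"
  unfolding arcs_def by blast

lemma finite_rE: "finite rE"
proof -
  have "rE = (\<lambda>e. (tail e, head e)) ` E" unfolding arcs_def by auto
  then show ?thesis using finE by simp
qed

lemma wf_rE: "wf rE" using finite_acyclic_wf[OF finite_rE acyc] .
lemma wf_conv: "wf (rE\<inverse>)" using finite_acyclic_wf_converse[OF finite_rE acyc] .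

lemma no_cycle: "(x,x) \<in> rE\<^sup>+ \<Longrightarrow> False"
  using acyc unfolding acyclic_def by blast

lemma antisym_reach: "(a,b)\<in>rE\<^sup>* \<Longrightarrow> (b,a)\<in>rE\<^sup>* \<Longrightarrow> a = b"
proof (rule ccontr)
  assume "(a,b)\<in>rE\<^sup>*" "(b,a)\<in>rE\<^sup>*" "a \<noteq> b"
  then have "(a,b)\<in>rE\<^sup>+" using rtranclD[of a b] by blast
  then have "(a,a)\<in>rE\<^sup>+" using \<open>(b,a)\<in>rE\<^sup>*\<close> by (rule trancl_rtrancl_trancl)
  then show False by (rule no_cycle)
qed

lemma sub_reach: "T \<subseteq> E \<Longrightarrow> (a,b) \<in> (arcs T tail head)\<^sup>* \<Longrightarrow> (a,b) \<in> rE\<^sup>*"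
  using rtrancl_mono[OF arcs_mono] by (rule subsetD)

lemma intree_reach:
  assumes TE: "T \<subseteq> E" and ex: "\<forall>u\<in>W-{r}. \<exists>e\<in>T. tail e = u \<and> head e \<in> W"
  shows "u \<in> W \<Longrightarrow> (u, r) \<in> (arcs T tail head)\<^sup>*"
proof (induction u rule: wf_induct[OF wf_conv])
  case (1 u)
  show ?case
  proof (cases "u = r")
    case False
    then obtain e where e: "e\<in>T" "tail e = u" "head e \<in> W" using ex 1 by blast
    then have a: "(u, head e) \<in> arcs T tail head" unfolding arcs_def by blast
    then have hu: "(head e, u) \<in> rE\<inverse>" using arcs_mono[OF TE] by (simp add: subsetD)
    have "(head e, r) \<in> (arcs T tail head)\<^sup>*" using 1(1)[rule_format, OF hu e(3)] .
    then show ?thesis by (rule converse_rtrancl_into_rtrancl[OF a])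
  qed simp
qed

lemma outtree_reach:
  assumes TE: "T \<subseteq> E" and ex: "\<forall>u\<in>W-{r}. \<exists>e\<in>T. head e = u \<and> tail e \<in> W"
  shows "u \<in> W \<Longrightarrow> (r, u) \<in> (arcs T tail head)\<^sup>*"
proof (induction u rule: wf_induct[OF wf_rE])
  case (1 u)
  show ?case
  proof (cases "u = r")
    case False
    then obtain e where e: "e\<in>T" "head e = u" "tail e \<in> W" using ex 1 by blast
    then have a: "(tail e, u) \<in> arcs T tail head" unfolding arcs_def by blast
    then have hu: "(tail e, u) \<in> rE" using arcs_mono[OF TE] by (simp add: subsetD)
    have "(r, tail e) \<in> (arcs T tail head)\<^sup>*" using 1(1)[rule_format, OF hu e(3)] .
    then show ?thesis by (rule rtrancl_into_rtrancl[OF _ a])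
  qed simp
qed

lemma first_edge:
  assumes "(u,w) \<in> rE\<^sup>*" "u \<noteq> w"
  shows "\<exists>e\<in>E. tail e = u \<and> (head e, w) \<in> rE\<^sup>*"
proof -
  have tc: "(u,w) \<in> rE\<^sup>+" using rtranclD[OF assms(1)] assms(2) by blast
  obtain y where "(u,y) \<in> rE" "(y,w) \<in> rE\<^sup>*" using tranclD[OF tc] by blast
  then show ?thesis unfolding arcs_iff by blast
qed

lemma last_edge:
  assumes "(u,w) \<in> rE\<^sup>*" "u \<noteq> w"
  shows "\<exists>e\<in>E. head e = w \<and> (u, tail e) \<in> rE\<^sup>*"
proof -
  have tc: "(u,w) \<in> rE\<^sup>+" using rtranclD[OF assms(1)] assms(2) by blast
  obtain y where "(y,w) \<in> rE" "(u,y) \<in> rE\<^sup>*" using tranclD2[OF tc] by blast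
  then show ?thesis unfolding arcs_iff by blast
qed

lemma last_edgeT:
  assumes "(u,w) \<in> (arcs T tail head)\<^sup>*" "u \<noteq> w"
  shows "\<exists>e\<in>T. head e = w \<and> (u, tail e) \<in> (arcs T tail head)\<^sup>*"
proof -
  have tc: "(u,w) \<in> (arcs T tail head)\<^sup>+" using rtranclD[OF assms(1)] assms(2) by blast
  obtain y where "(y,w) \<in> arcs T tail head" "(u,y) \<in> (arcs T tail head)\<^sup>*" using tranclD2[OF tc] by blast
  then show ?thesis unfolding arcs_iff by blast
qed

lemma pred_closed:
  assumes pc: "\<forall>e\<in>T. head e \<in> Z \<longrightarrow> tail e \<in> Z"
    and "(x,a) \<in> (arcs T tail head)\<^sup>*" "a \<in> Z"
  shows "x \<in> Z"
  using assms(2,3)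
proof (induction rule: converse_rtrancl_induct)
  case base then show ?case by simp
next
  case (step y z) then show ?case using pc by (auto simp: arcs_iff)
qed

lemma pred_closed_path:
  assumes pc: "\<forall>e\<in>T. head e \<in> Z \<longrightarrow> tail e \<in> Z"
    and "(x,a) \<in> (arcs T tail head)\<^sup>*" "a \<in> Z"
  shows "(x,a) \<in> {(p,q). (p,q) \<in> arcs T tail head \<and> p \<in> Z \<and> q \<in> Z}\<^sup>*"
  using assms(2,3)
proof (induction rule: converse_rtrancl_induct)
  case base then show ?case by simp
next
  case (step y z)
  then have "z \<in> Z" using pred_closed[OF pc] by blast
  then have "y \<in> Z" using step pc by (auto simp: arcs_iff)
  then show ?case using step \<open>z\<in>Z\<close> by (intro converse_rtrancl_into_rtrancl[of y z]) auto
qed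

lemma fwd_closed_path:
  assumes fc: "\<forall>e\<in>T. tail e \<in> Z \<longrightarrow> head e \<in> Z"
    and "(x,a) \<in> (arcs T tail head)\<^sup>*" "x \<in> Z"
  shows "(x,a) \<in> {(p,q). (p,q) \<in> arcs T tail head \<and> p \<in> Z}\<^sup>* \<and> a \<in> Z"
  using assms(2,3)
proof (induction rule: rtrancl_induct)
  case base then show ?case by simp
next
  case (step y z)
  then have "y \<in> Z" by blast
  then have "z \<in> Z" using step fc by (auto simp: arcs_iff)
  then show ?case using step \<open>y\<in>Z\<close> by (auto intro: rtrancl_into_rtrancl[of x y _ z])
qed

lemma chain_contra:
  assumes RT: "R \<subseteq> arcs T tail head" and TE: "T \<subseteq> E"
    and "e\<in>T" "e'\<in>T" "head e = head e'"
    and ch: "(tail e, tail e') \<in> R\<^sup>*" and neq: "tail e \<noteq> tail e'"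
    and fn: "\<And>q. (tail e, q) \<in> R \<Longrightarrow> q = head e"
  shows False
proof -
  have tc: "(tail e, tail e') \<in> R\<^sup>+" using rtranclD[OF ch] neq by blast
  obtain c where c: "(tail e, c) \<in> R" "(c, tail e') \<in> R\<^sup>*" using tranclD[OF tc] by blast
  have "c = head e" using fn c(1) .
  then have "(head e, tail e') \<in> rE\<^sup>*" using c(2) RT arcs_mono[OF TE] rtrancl_mono by blast
  moreover have "(tail e', head e) \<in> rE" using assms(4,5) TE unfolding arcs_iff by auto
  ultimately have "(head e, head e) \<in> rE\<^sup>+" by (rule rtrancl_into_trancl1)
  then show False by (rule no_cycle)
qed

lemma detB:
  assumes TE: "T \<subseteq> E"
    and pc: "\<forall>e\<in>T. head e \<in> Z \<longrightarrow> tail e \<in> Z"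
    and fn: "\<forall>e\<in>T. \<forall>e'\<in>T. tail e = tail e' \<and> tail e \<in> Z \<and> head e \<in> Z \<and> head e' \<in> Z \<longrightarrow> e = e'"
    and e: "e\<in>T" "e'\<in>T" "e\<noteq>e'" "head e = head e'" "head e \<in> Z"
    and x: "(x, tail e) \<in> (arcs T tail head)\<^sup>*" "(x, tail e') \<in> (arcs T tail head)\<^sup>*"
  shows False
proof -
  define RZ where "RZ = {(p,q). (p,q) \<in> arcs T tail head \<and> p \<in> Z \<and> q \<in> Z}"
  have tz: "tail e \<in> Z" "tail e' \<in> Z" using pc e by auto
  have p1: "(x, tail e) \<in> RZ\<^sup>*" unfolding RZ_def using pred_closed_path[OF pc x(1) tz(1)] .
  have p2: "(x, tail e') \<in> RZ\<^sup>*" unfolding RZ_def using pred_closed_path[OF pc x(2) tz(2)] .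
  have fnR: "q=q'" if h1: "(p,q)\<in>RZ" and h2: "(p,q')\<in>RZ" for p q q'
  proof -
    obtain e1 where "e1\<in>T" "tail e1 = p" "head e1 = q" "p\<in>Z" "q\<in>Z" using h1 unfolding RZ_def arcs_iff by blast
    moreover obtain e2 where "e2\<in>T" "tail e2 = p" "head e2 = q'" "q'\<in>Z" using h2 unfolding RZ_def arcs_iff by blast
    ultimately have "e1 = e2" using fn by auto
    then show ?thesis using \<open>head e1 = q\<close> \<open>head e2 = q'\<close> by simp
  qed
  have RT: "RZ \<subseteq> arcs T tail head" unfolding RZ_def by blast
  have h1: "(tail e, head e) \<in> RZ" "(tail e', head e') \<in> RZ"
    unfolding RZ_def arcs_iff using e tz by auto
  have neq: "tail e \<noteq> tail e'"
  proof
    assume "tail e = tail e'"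
    then have "e = e'" using fn e(1,2,4,5) tz by auto
    then show False using e(3) by simp
  qed
  have fe: "\<And>q. (tail e, q) \<in> RZ \<Longrightarrow> q = head e" using fnR h1(1) by blast
  have fe': "\<And>q. (tail e', q) \<in> RZ \<Longrightarrow> q = head e'" using fnR h1(2) by blast
  from func_comparable[OF fnR p1 p2] show False
  proof
    assume "(tail e, tail e') \<in> RZ\<^sup>*"
    then show False using chain_contra[OF RT TE e(1,2,4) _ neq fe] by blast
  next
    assume "(tail e', tail e) \<in> RZ\<^sup>*"
    then show False using chain_contra[OF RT TE e(2,1) e(4)[symmetric] _ neq[symmetric] fe'] by blast
  qed
qed


lemma sum_if_const:
  assumes "finite S"
  shows "(\<Sum>x\<in>S. if P x then c else 0) = of_nat (card {x\<in>S. P x}) * (c::'a::field)"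
proof -
  have "(\<Sum>x\<in>S. if P x then c else 0) = (\<Sum>x\<in>{x\<in>S. P x}. c)"
    using sum.inter_filter[OF assms, of "\<lambda>_. c" P] by simp
  then show ?thesis by simp
qed

lemma GL:
  fixes s t :: "nat \<Rightarrow> 'v"
  assumes TE: "T \<subseteq> E"
    and srcin: "\<forall>i<3. \<forall>e\<in>E. head e \<noteq> s i"
    and sinj: "inj_on s {..<3}"
    and ts: "\<forall>i<3. \<forall>j<3. t j \<noteq> s i"
    and ND: "\<forall>e\<in>T. \<forall>e'\<in>T. e \<noteq> e' \<and> head e = head e' \<longrightarrow>
              (\<forall>x. (x, tail e) \<in> (arcs T tail head)\<^sup>* \<longrightarrow> (x, tail e') \<in> (arcs T tail head)\<^sup>* \<longrightarrow> False)"
    and RR: "\<forall>i<3. \<forall>j<3. (s i, t j) \<in> (arcs T tail head)\<^sup>*"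
  shows "\<exists>(alpha :: 'e \<Rightarrow> 'a::field) beta msg.
           is_linear_code E tail head 3 s alpha beta msg \<and>
           (\<forall>j<3. recovers_sum E head 3 msg (t j))"
proof -
  define Tr where "Tr = arcs T tail head"
  have finT: "finite T" using finite_subset[OF TE finE] .
  define val :: "'v \<Rightarrow> (nat \<Rightarrow> 'a) \<Rightarrow> 'a" where
    "val u X = (\<Sum>i<3. if (s i, u) \<in> Tr\<^sup>* then X i else 0)" for u X
  define msg :: "'e \<Rightarrow> (nat \<Rightarrow> 'a) \<Rightarrow> 'a" where
    "msg e X = (if e \<in> T then val (tail e) X else 0)" for e X
  define alpha :: "'e \<Rightarrow> 'a" where "alpha e = (if e \<in> T then 1 else 0)" for e
  define beta :: "'e \<Rightarrow> 'e \<Rightarrow> 'a" where "beta e' e = (if e' \<in> T \<and> e \<in> T then 1 else 0)" for e' e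
  have cnt: "card {e\<in>T. head e = u \<and> (s i, tail e) \<in> Tr\<^sup>*} = (if (s i, u) \<in> Tr\<^sup>* then 1 else 0)"
    if iu: "i < 3" "u \<noteq> s i" for i u
  proof -
    let ?S = "{e\<in>T. head e = u \<and> (s i, tail e) \<in> Tr\<^sup>*}"
    have fS: "finite ?S" using finT by simp
    have le: "card ?S \<le> Suc 0"
      unfolding card_le_Suc0_iff_eq[OF fS]
    proof (intro ballI)
      fix a1 a2 assume a: "a1 \<in> ?S" "a2 \<in> ?S"
      show "a1 = a2"
      proof (rule ccontr)
        assume "a1 \<noteq> a2"
        moreover have "a1\<in>T" "a2\<in>T" "head a1 = head a2" "(s i, tail a1) \<in> (arcs T tail head)\<^sup>*"
          "(s i, tail a2) \<in> (arcs T tail head)\<^sup>*" using a unfolding Tr_def by auto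
        ultimately show False using ND by blast
      qed
    qed
    show ?thesis
    proof (cases "(s i, u) \<in> Tr\<^sup>*")
      case True
      obtain e where "e\<in>T" "head e = u" "(s i, tail e) \<in> Tr\<^sup>*"
        using last_edgeT[of "s i" u T] True iu(2) unfolding Tr_def by metis
      then have "?S \<noteq> {}" by blast
      then have "card ?S \<noteq> 0" using fS by simp
      then show ?thesis using le True by simp
    next
      case False
      have Se: "?S = {}"
      proof (rule ccontr)
        assume "?S \<noteq> {}"
        then obtain e where e: "e\<in>T" "head e = u" "(s i, tail e) \<in> Tr\<^sup>*" by blast
        have "(tail e, u) \<in> Tr" unfolding Tr_def arcs_iff using e by blast
        then have "(s i, u) \<in> Tr\<^sup>*" using e(3) by (rule rtrancl_into_rtrancl[rotated])
        then show False using False by simp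
      qed
      have "card ?S = 0" by (simp only: Se card.empty)
      then show ?thesis using False by simp
    qed
  qed
  have sumid: "(\<Sum>e'\<in>{e'\<in>E. head e' = u}. if e' \<in> T then val (tail e') X else 0) = val u X"
    if u: "\<forall>i<3. u \<noteq> s i" for u X
  proof -
    let ?S = "{e'\<in>T. head e' = u}"
    have fS: "finite ?S" using finT by simp
    have "(\<Sum>e'\<in>{e'\<in>E. head e' = u}. if e' \<in> T then val (tail e') X else 0)
          = (\<Sum>e'\<in>{e''\<in>{e'\<in>E. head e' = u}. e'' \<in> T}. val (tail e') X)"
      using sum.inter_filter[of "{e'\<in>E. head e' = u}" "\<lambda>e'. val (tail e') X" "\<lambda>e'. e' \<in> T"] finE by simp
    also have "{e''\<in>{e'\<in>E. head e' = u}. e'' \<in> T} = ?S" using TE by blast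
    also have "(\<Sum>e'\<in>?S. val (tail e') X) = (\<Sum>i<3. \<Sum>e'\<in>?S. if (s i, tail e') \<in> Tr\<^sup>* then X i else 0)"
      unfolding val_def by (rule sum.swap)
    also have "\<dots> = (\<Sum>i<3. of_nat (card {e'\<in>?S. (s i, tail e') \<in> Tr\<^sup>*}) * X i)"
      by (rule sum.cong[OF refl], rule sum_if_const[OF fS])
    also have "\<dots> = (\<Sum>i<3. if (s i, u) \<in> Tr\<^sup>* then X i else 0)"
    proof (rule sum.cong[OF refl])
      fix i assume "i \<in> {..<3::nat}"
      then have i: "i < 3" by simp
      have "{e'\<in>?S. (s i, tail e') \<in> Tr\<^sup>*} = {e\<in>T. head e = u \<and> (s i, tail e) \<in> Tr\<^sup>*}" by blast
      then show "of_nat (card {e'\<in>?S. (s i, tail e') \<in> Tr\<^sup>*}) * X i = (if (s i, u) \<in> Tr\<^sup>* then X i else 0)"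
        using cnt[OF i] u i by simp
    qed
    finally show ?thesis unfolding val_def by simp
  qed
  have valsrc: "val (s k) X = X k" if k: "k < 3" for k X
  proof -
    have "(s i, s k) \<in> Tr\<^sup>* \<longleftrightarrow> i = k" if i: "i < 3" for i
    proof
      assume r: "(s i, s k) \<in> Tr\<^sup>*"
      have "s i = s k"
      proof (rule ccontr)
        assume "s i \<noteq> s k"
        then obtain e where "e\<in>T" "head e = s k" using last_edgeT[of "s i" "s k" T] r unfolding Tr_def by metis
        then show False using srcin k TE by blast
      qed
      then show "i = k" using sinj i k unfolding inj_on_def by simp
    qed simp
    then have "val (s k) X = (\<Sum>i<3. if i = k then X i else 0)" unfolding val_def
      by (intro sum.cong) auto
    also have "\<dots> = X k" using k by simp
    finally show ?thesis .
  qed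
  have code: "is_linear_code E tail head 3 s alpha beta msg"
    unfolding is_linear_code_def
  proof (intro allI ballI conjI impI)
    fix X e i assume "e \<in> E" "i < (3::nat)" "tail e = s i"
    then show "msg e X = alpha e * X i" unfolding msg_def alpha_def using valsrc by simp
  next
    fix X e assume e: "e \<in> E" and ns: "\<forall>i<3. tail e \<noteq> s i"
    show "msg e X = (\<Sum>e'\<in>{e' \<in> E. head e' = tail e}. beta e' e * msg e' X)"
    proof (cases "e \<in> T")
      case True
      have "(\<Sum>e'\<in>{e' \<in> E. head e' = tail e}. beta e' e * msg e' X)
           = (\<Sum>e'\<in>{e' \<in> E. head e' = tail e}. if e' \<in> T then val (tail e') X else 0)"
        unfolding beta_def msg_def using True by (intro sum.cong) auto
      also have "\<dots> = val (tail e) X" using sumid ns by blast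
      finally show ?thesis unfolding msg_def using True by simp
    next
      case False
      then show ?thesis unfolding msg_def beta_def by simp
    qed
  qed
  have rec: "recovers_sum E head 3 msg (t j)" if j: "j < 3" for j
    unfolding recovers_sum_def
  proof (intro exI allI)
    fix X :: "nat \<Rightarrow> 'a"
    have "(\<Sum>e\<in>{e \<in> E. head e = t j}. 1 * msg e X)
         = (\<Sum>e\<in>{e \<in> E. head e = t j}. if e \<in> T then val (tail e) X else 0)"
      unfolding msg_def by (intro sum.cong) auto
    also have "\<dots> = val (t j) X" using sumid ts j by blast
    also have "\<dots> = (\<Sum>i<3. X i)" unfolding val_def using RR j unfolding Tr_def by (intro sum.cong) auto
    finally show "(\<Sum>e\<in>{e \<in> E. head e = t j}. 1 * msg e X) = (\<Sum>i<3. X i)" .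
  qed
  show ?thesis using code rec by blast
qed

end



context netw
begin

lemma case33:
  fixes s t :: "nat \<Rightarrow> 'v" and v :: 'v
  assumes srcin: "\<forall>i<3. \<forall>e\<in>E. head e \<noteq> s i"
    and sinj: "inj_on s {..<3}"
    and ts: "\<forall>i<3. \<forall>j<3. t j \<noteq> s i"
    and sU: "\<forall>i<3. (s i, v) \<in> rE\<^sup>*"
    and tR: "\<forall>j<3. (v, t j) \<in> rE\<^sup>*"
  shows "\<exists>(alpha :: 'e \<Rightarrow> 'a::field) beta msg.
           is_linear_code E tail head 3 s alpha beta msg \<and>
           (\<forall>j<3. recovers_sum E head 3 msg (t j))"
proof -
  define U where "U = {u. (u,v) \<in> rE\<^sup>*}"
  define R where "R = {w. (v,w) \<in> rE\<^sup>*}"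
  define nxU where "nxU u = (SOME e. e\<in>E \<and> tail e = u \<and> head e \<in> U)" for u
  define pvR where "pvR w = (SOME e. e\<in>E \<and> head e = w \<and> tail e \<in> R)" for w
  have nxU: "nxU u \<in> E \<and> tail (nxU u) = u \<and> head (nxU u) \<in> U" if "u \<in> U - {v}" for u
  proof -
    have "\<exists>e. e\<in>E \<and> tail e = u \<and> head e \<in> U"
      using first_edge[of u v] that unfolding U_def by blast
    then show ?thesis unfolding nxU_def by (rule someI_ex)
  qed
  have pvR: "pvR w \<in> E \<and> head (pvR w) = w \<and> tail (pvR w) \<in> R" if "w \<in> R - {v}" for w
  proof -
    have "\<exists>e. e\<in>E \<and> head e = w \<and> tail e \<in> R"
      using last_edge[of v w] that unfolding R_def by blast
    then show ?thesis unfolding pvR_def by (rule someI_ex)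
  qed
  have UR: "x = v" if "x \<in> U" "x \<in> R" for x
    using antisym_reach that unfolding U_def R_def by blast
  define T where "T = {e\<in>E. (tail e \<in> U-{v} \<and> e = nxU (tail e)) \<or> (head e \<in> R-{v} \<and> e = pvR (head e))}"
  have TE: "T \<subseteq> E" unfolding T_def by blast
  have Tcases: "(tail e \<in> U-{v} \<and> e = nxU (tail e) \<and> head e \<in> U) \<or> (head e \<in> R-{v} \<and> e = pvR (head e) \<and> tail e \<in> R)"
    if "e \<in> T" for e
  proof -
    have "(tail e \<in> U-{v} \<and> e = nxU (tail e)) \<or> (head e \<in> R-{v} \<and> e = pvR (head e))"
      using that unfolding T_def by blast
    then show ?thesis
    proof
      assume a: "tail e \<in> U-{v} \<and> e = nxU (tail e)"
      then have "head e \<in> U" using nxU[of "tail e"] by simp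
      then show ?thesis using a by blast
    next
      assume a: "head e \<in> R-{v} \<and> e = pvR (head e)"
      then have "tail e \<in> R" using pvR[of "head e"] by simp
      then show ?thesis using a by blast
    qed
  qed
  have ND: "\<forall>e\<in>T. \<forall>e'\<in>T. e \<noteq> e' \<and> head e = head e' \<longrightarrow>
              (\<forall>x. (x, tail e) \<in> (arcs T tail head)\<^sup>* \<longrightarrow> (x, tail e') \<in> (arcs T tail head)\<^sup>* \<longrightarrow> False)"
  proof (intro ballI impI allI)
    fix e e' x assume e: "e\<in>T" "e'\<in>T" and ne: "e \<noteq> e' \<and> head e = head e'"
      and x: "(x, tail e) \<in> (arcs T tail head)\<^sup>*" "(x, tail e') \<in> (arcs T tail head)\<^sup>*"
    show False
    proof (cases "head e \<in> U")
      case True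
      have pc: "\<forall>e\<in>T. head e \<in> U \<longrightarrow> tail e \<in> U"
      proof (intro ballI impI)
        fix e1 assume "e1 \<in> T" "head e1 \<in> U"
        then show "tail e1 \<in> U" using Tcases[of e1] UR by blast
      qed
      have fn: "\<forall>e\<in>T. \<forall>e'\<in>T. tail e = tail e' \<and> tail e \<in> U \<and> head e \<in> U \<and> head e' \<in> U \<longrightarrow> e = e'"
      proof (intro ballI impI)
        fix e1 e2 assume e12: "e1 \<in> T" "e2 \<in> T" and c: "tail e1 = tail e2 \<and> tail e1 \<in> U \<and> head e1 \<in> U \<and> head e2 \<in> U"
        have "tail e1 \<in> U-{v} \<and> e1 = nxU (tail e1)" using Tcases[OF e12(1)] c UR by blast
        moreover have "tail e2 \<in> U-{v} \<and> e2 = nxU (tail e2)" using Tcases[OF e12(2)] c UR by blast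
        ultimately show "e1 = e2" using c by simp
      qed
      show False using detB[OF TE pc fn e(1,2) _ _ True x] ne by blast
    next
      case False
      then have "head e \<in> R-{v} \<and> e = pvR (head e)" using Tcases[OF e(1)] by blast
      moreover have "head e' \<in> R-{v} \<and> e' = pvR (head e')" using Tcases[OF e(2)] False ne by auto
      ultimately show False using ne by simp
    qed
  qed
  have reach1: "(u, v) \<in> (arcs T tail head)\<^sup>*" if "u \<in> U" for u
  proof (rule intree_reach[OF TE _ that])
    show "\<forall>u\<in>U - {v}. \<exists>e\<in>T. tail e = u \<and> head e \<in> U"
    proof
      fix u assume u: "u \<in> U - {v}"
      have "nxU u \<in> T" using nxU[OF u] u unfolding T_def by auto
      then show "\<exists>e\<in>T. tail e = u \<and> head e \<in> U" using nxU[OF u] by blast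
    qed
  qed
  have reach2: "(v, w) \<in> (arcs T tail head)\<^sup>*" if "w \<in> R" for w
  proof (rule outtree_reach[OF TE _ that])
    show "\<forall>u\<in>R - {v}. \<exists>e\<in>T. head e = u \<and> tail e \<in> R"
    proof
      fix u assume u: "u \<in> R - {v}"
      have "pvR u \<in> T" using pvR[OF u] u unfolding T_def by auto
      then show "\<exists>e\<in>T. head e = u \<and> tail e \<in> R" using pvR[OF u] by blast
    qed
  qed
  have RR: "\<forall>i<3. \<forall>j<3. (s i, t j) \<in> (arcs T tail head)\<^sup>*"
  proof (intro allI impI)
    fix i j :: nat assume "i < 3" "j < 3"
    then have "s i \<in> U" "t j \<in> R" using sU tR unfolding U_def R_def by auto
    then show "(s i, t j) \<in> (arcs T tail head)\<^sup>*" using reach1 reach2 by (meson rtrancl_trans)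
  qed
  show ?thesis using GL[OF TE srcin sinj ts ND RR] .
qed

end


context netw
begin

lemma noin_src:
  assumes srcin: "\<forall>e\<in>E. head e \<noteq> y" and "(x, y) \<in> rE\<^sup>*"
  shows "x = y"
proof (rule ccontr)
  assume "x \<noteq> y"
  then obtain e where "e\<in>E" "head e = y" using last_edge[OF assms(2)] by blast
  then show False using srcin by blast
qed

lemma case23:
  fixes s t :: "nat \<Rightarrow> 'v" and v :: 'v and k :: nat
  assumes srcin: "\<forall>i<3. \<forall>e\<in>E. head e \<noteq> s i"
    and sinj: "inj_on s {..<3}"
    and ts: "\<forall>i<3. \<forall>j<3. t j \<noteq> s i"
    and k: "k < 3"
    and skv: "(s k, v) \<notin> rE\<^sup>*"
    and sU: "\<forall>i<3. i \<noteq> k \<longrightarrow> (s i, v) \<in> rE\<^sup>*"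
    and tR: "\<forall>j<3. (v, t j) \<in> rE\<^sup>*"
    and conn: "\<forall>j<3. (s k, t j) \<in> rE\<^sup>*"
  shows "\<exists>(alpha :: 'e \<Rightarrow> 'a::field) beta msg.
           is_linear_code E tail head 3 s alpha beta msg \<and>
           (\<forall>j<3. recovers_sum E head 3 msg (t j))"
proof -
  define U where "U = {u. (u,v) \<in> rE\<^sup>*}"
  define R where "R = {w. (v,w) \<in> rE\<^sup>*}"
  define D where "D = {w. (s k,w) \<in> rE\<^sup>*}"
  define A where "A = D - R"
  define F where "F = R \<inter> D"
  define B where "B = R - D"
  define hasF where "hasF f \<longleftrightarrow> (\<exists>e. e\<in>E \<and> head e = f \<and> tail e \<in> F)" for f
  define nxU where "nxU u = (SOME e. e\<in>E \<and> tail e = u \<and> head e \<in> U)" for u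
  define pvB where "pvB w = (SOME e. e\<in>E \<and> head e = w \<and> tail e \<in> B)" for w
  define pvA where "pvA w = (SOME e. e\<in>E \<and> head e = w \<and> tail e \<in> A)" for w
  define pvF where "pvF w = (SOME e. e\<in>E \<and> head e = w \<and> tail e \<in> F)" for w
  define pFA where "pFA w = (SOME e. e\<in>E \<and> head e = w \<and> tail e \<in> A)" for w
  define pFB where "pFB w = (SOME e. e\<in>E \<and> head e = w \<and> tail e \<in> B)" for w
  have srck: "\<forall>e\<in>E. head e \<noteq> s k" using srcin k by blast
  have UR: "x = v" if "x \<in> U" "x \<in> R" for x
    using antisym_reach that unfolding U_def R_def by blast
  have DU: "x \<notin> U" if "x \<in> D" for x
  proof
    assume "x \<in> U"
    then have "(s k, v) \<in> rE\<^sup>*" using that unfolding U_def D_def by (meson rtrancl_trans mem_Collect_eq)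
    then show False using skv by blast
  qed
  have vU: "v \<in> U" unfolding U_def by simp
  have vB: "v \<in> B" using DU[of v] vU unfolding B_def R_def by auto
  have skA: "s k \<in> A"
  proof -
    have "s k \<notin> R"
    proof
      assume "s k \<in> R"
      then have "v = s k" using noin_src[OF srck] unfolding R_def by blast
      then show False using skv by simp
    qed
    then show ?thesis unfolding A_def D_def by simp
  qed
  have nxU: "nxU u \<in> E \<and> tail (nxU u) = u \<and> head (nxU u) \<in> U" if "u \<in> U - {v}" for u
  proof -
    have "\<exists>e. e\<in>E \<and> tail e = u \<and> head e \<in> U"
      using first_edge[of u v] that unfolding U_def by blast
    then show ?thesis unfolding nxU_def by (rule someI_ex)
  qed
  have pvB: "pvB w \<in> E \<and> head (pvB w) = w \<and> tail (pvB w) \<in> B" if w: "w \<in> B - {v}" for w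
  proof -
    obtain e where e: "e\<in>E" "head e = w" "(v, tail e) \<in> rE\<^sup>*"
      using last_edge[of v w] w unfolding B_def R_def by blast
    have "tail e \<notin> D"
    proof
      assume "tail e \<in> D"
      moreover have "(tail e, w) \<in> rE" using e unfolding arcs_iff by blast
      ultimately have "w \<in> D" unfolding D_def by (simp add: rtrancl_into_rtrancl)
      then show False using w unfolding B_def by simp
    qed
    then have "\<exists>e. e\<in>E \<and> head e = w \<and> tail e \<in> B" using e unfolding B_def R_def by blast
    then show ?thesis unfolding pvB_def by (rule someI_ex)
  qed
  have pvA: "pvA w \<in> E \<and> head (pvA w) = w \<and> tail (pvA w) \<in> A" if w: "w \<in> A - {s k}" for w
  proof -
    obtain e where e: "e\<in>E" "head e = w" "(s k, tail e) \<in> rE\<^sup>*"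
      using last_edge[of "s k" w] w unfolding A_def D_def by blast
    have "tail e \<notin> R"
    proof
      assume "tail e \<in> R"
      moreover have "(tail e, w) \<in> rE" using e unfolding arcs_iff by blast
      ultimately have "w \<in> R" unfolding R_def by (simp add: rtrancl_into_rtrancl)
      then show False using w unfolding A_def by simp
    qed
    then have "\<exists>e. e\<in>E \<and> head e = w \<and> tail e \<in> A" using e unfolding A_def D_def by blast
    then show ?thesis unfolding pvA_def by (rule someI_ex)
  qed
  have pvF: "pvF w \<in> E \<and> head (pvF w) = w \<and> tail (pvF w) \<in> F" if w: "hasF w" for w
    using w unfolding hasF_def pvF_def by (rule someI_ex)
  have pFA: "pFA w \<in> E \<and> head (pFA w) = w \<and> tail (pFA w) \<in> A" if w: "w \<in> F" "\<not> hasF w" for w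
  proof -
    have "w \<noteq> s k" using w skA unfolding F_def A_def by auto
    then obtain e where e: "e\<in>E" "head e = w" "(s k, tail e) \<in> rE\<^sup>*"
      using last_edge[of "s k" w] w unfolding F_def D_def by blast
    have "tail e \<notin> R"
    proof
      assume "tail e \<in> R"
      then have "tail e \<in> F" using e(3) unfolding F_def D_def by simp
      then show False using w(2) e unfolding hasF_def by blast
    qed
    then have "\<exists>e. e\<in>E \<and> head e = w \<and> tail e \<in> A" using e unfolding A_def D_def by blast
    then show ?thesis unfolding pFA_def by (rule someI_ex)
  qed
  have pFB: "pFB w \<in> E \<and> head (pFB w) = w \<and> tail (pFB w) \<in> B" if w: "w \<in> F" "\<not> hasF w" for w
  proof -
    have "w \<noteq> v" using w vB unfolding F_def B_def by auto
    then obtain e where e: "e\<in>E" "head e = w" "(v, tail e) \<in> rE\<^sup>*"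
      using last_edge[of v w] w unfolding F_def R_def by blast
    have "tail e \<notin> D"
    proof
      assume "tail e \<in> D"
      then have "tail e \<in> F" using e(3) unfolding F_def R_def by simp
      then show False using w(2) e unfolding hasF_def by blast
    qed
    then have "\<exists>e. e\<in>E \<and> head e = w \<and> tail e \<in> B" using e unfolding B_def R_def by blast
    then show ?thesis unfolding pFB_def by (rule someI_ex)
  qed
  define T where "T = {e\<in>E. (tail e \<in> U-{v} \<and> e = nxU (tail e))
      \<or> (head e \<in> B-{v} \<and> e = pvB (head e))
      \<or> (head e \<in> A-{s k} \<and> e = pvA (head e))
      \<or> (head e \<in> F \<and> hasF (head e) \<and> e = pvF (head e))
      \<or> (head e \<in> F \<and> \<not> hasF (head e) \<and> (e = pFA (head e) \<or> e = pFB (head e)))}"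
  have TE: "T \<subseteq> E" unfolding T_def by blast
  have Tcases: "(tail e \<in> U-{v} \<and> e = nxU (tail e) \<and> head e \<in> U)
      \<or> (head e \<in> B-{v} \<and> e = pvB (head e) \<and> tail e \<in> B)
      \<or> (head e \<in> A-{s k} \<and> e = pvA (head e) \<and> tail e \<in> A)
      \<or> (head e \<in> F \<and> hasF (head e) \<and> e = pvF (head e) \<and> tail e \<in> F)
      \<or> (head e \<in> F \<and> \<not> hasF (head e) \<and> e = pFA (head e) \<and> tail e \<in> A)
      \<or> (head e \<in> F \<and> \<not> hasF (head e) \<and> e = pFB (head e) \<and> tail e \<in> B)"
    if "e \<in> T" for e
  proof -
    have c: "(tail e \<in> U-{v} \<and> e = nxU (tail e))
      \<or> (head e \<in> B-{v} \<and> e = pvB (head e))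
      \<or> (head e \<in> A-{s k} \<and> e = pvA (head e))
      \<or> (head e \<in> F \<and> hasF (head e) \<and> e = pvF (head e))
      \<or> (head e \<in> F \<and> \<not> hasF (head e) \<and> e = pFA (head e))
      \<or> (head e \<in> F \<and> \<not> hasF (head e) \<and> e = pFB (head e))"
      using that unfolding T_def by blast
    show ?thesis
    proof (rule disjE[OF c])
      assume a: "tail e \<in> U-{v} \<and> e = nxU (tail e)"
      then have "head e \<in> U" using nxU[of "tail e"] by simp
      then show ?thesis using a by blast
    next
      assume c2: "(head e \<in> B-{v} \<and> e = pvB (head e))
      \<or> (head e \<in> A-{s k} \<and> e = pvA (head e))
      \<or> (head e \<in> F \<and> hasF (head e) \<and> e = pvF (head e))
      \<or> (head e \<in> F \<and> \<not> hasF (head e) \<and> e = pFA (head e))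
      \<or> (head e \<in> F \<and> \<not> hasF (head e) \<and> e = pFB (head e))"
      show ?thesis
      proof (rule disjE[OF c2])
        assume a: "head e \<in> B-{v} \<and> e = pvB (head e)"
        then have "tail e \<in> B" using pvB[of "head e"] by simp
        then show ?thesis using a by blast
      next
        assume c3: "(head e \<in> A-{s k} \<and> e = pvA (head e))
          \<or> (head e \<in> F \<and> hasF (head e) \<and> e = pvF (head e))
          \<or> (head e \<in> F \<and> \<not> hasF (head e) \<and> e = pFA (head e))
          \<or> (head e \<in> F \<and> \<not> hasF (head e) \<and> e = pFB (head e))"
        show ?thesis
        proof (rule disjE[OF c3])
          assume a: "head e \<in> A-{s k} \<and> e = pvA (head e)"
          then have "tail e \<in> A" using pvA[of "head e"] by simp
          then show ?thesis using a by blast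
        next
          assume c4: "(head e \<in> F \<and> hasF (head e) \<and> e = pvF (head e))
            \<or> (head e \<in> F \<and> \<not> hasF (head e) \<and> e = pFA (head e))
            \<or> (head e \<in> F \<and> \<not> hasF (head e) \<and> e = pFB (head e))"
          show ?thesis
          proof (rule disjE[OF c4])
            assume a: "head e \<in> F \<and> hasF (head e) \<and> e = pvF (head e)"
            then have "tail e \<in> F" using pvF[of "head e"] by simp
            then show ?thesis using a by blast
          next
            assume c5: "(head e \<in> F \<and> \<not> hasF (head e) \<and> e = pFA (head e))
              \<or> (head e \<in> F \<and> \<not> hasF (head e) \<and> e = pFB (head e))"
            show ?thesis
            proof (rule disjE[OF c5])
              assume a: "head e \<in> F \<and> \<not> hasF (head e) \<and> e = pFA (head e)"
              then have "tail e \<in> A" using pFA[of "head e"] by simp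
              then show ?thesis using a by blast
            next
              assume a: "head e \<in> F \<and> \<not> hasF (head e) \<and> e = pFB (head e)"
              then have "tail e \<in> B" using pFB[of "head e"] by simp
              then show ?thesis using a by blast
            qed
          qed
        qed
      qed
    qed
  qed
  have dAB: "A \<inter> B = {}" "A \<inter> F = {}" "B \<inter> F = {}" unfolding A_def B_def F_def by auto
  have dUA: "x \<notin> U" if "x \<in> A" for x using that DU unfolding A_def by auto
  have dUF: "x \<notin> U" if "x \<in> F" for x using that DU unfolding F_def by auto
  have dUB: "x \<notin> U" if "x \<in> B" "x \<noteq> v" for x using that UR unfolding B_def by auto
  have dAB1: "x \<notin> B" if "x \<in> A" for x using that dAB by auto
  have dAF1: "x \<notin> F" if "x \<in> A" for x using that dAB by auto
  have dBF1: "x \<notin> F" if "x \<in> B" for x using that dAB by auto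
  have inU: "e = nxU (tail e) \<and> tail e \<in> U" if "e \<in> T" "head e \<in> U" for e
    using Tcases[OF that(1)] that(2) dUA dUF dUB by (elim disjE) auto
  have inB: "e = pvB (head e) \<and> tail e \<in> B" if "e \<in> T" "head e \<in> B" "head e \<notin> U" for e
    using Tcases[OF that(1)] that(2,3) dAB1 dBF1 by (elim disjE) auto
  have inA: "e = pvA (head e) \<and> tail e \<in> A" if "e \<in> T" "head e \<in> A" for e
    using Tcases[OF that(1)] that(2) dUA dAB1 dAF1 by (elim disjE) auto
  have inF: "(hasF (head e) \<and> e = pvF (head e)) \<or> (\<not> hasF (head e) \<and> ((e = pFA (head e) \<and> tail e \<in> A) \<or> (e = pFB (head e) \<and> tail e \<in> B)))"
    if "e \<in> T" "head e \<in> F" for e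
    using Tcases[OF that(1)] that(2) dUF dAF1 dBF1 by (elim disjE) auto
  have inAll: "head e \<in> U \<or> head e \<in> B \<or> head e \<in> A \<or> head e \<in> F" if "e \<in> T" for e
    using Tcases[OF that] by (elim disjE) auto
  have ND: "\<forall>e\<in>T. \<forall>e'\<in>T. e \<noteq> e' \<and> head e = head e' \<longrightarrow>
              (\<forall>x. (x, tail e) \<in> (arcs T tail head)\<^sup>* \<longrightarrow> (x, tail e') \<in> (arcs T tail head)\<^sup>* \<longrightarrow> False)"
  proof (intro ballI impI allI)
    fix e e' x assume e: "e\<in>T" "e'\<in>T" and ne: "e \<noteq> e' \<and> head e = head e'"
      and x: "(x, tail e) \<in> (arcs T tail head)\<^sup>*" "(x, tail e') \<in> (arcs T tail head)\<^sup>*"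
    define h where "h = head e"
    have hh: "head e = h" "head e' = h" using ne unfolding h_def by auto
    have neq: "e \<noteq> e'" using ne by simp
    show False
    proof (cases "h \<in> U")
      case True
      have pc: "\<forall>e\<in>T. head e \<in> U \<longrightarrow> tail e \<in> U" using inU by blast
      have fn: "\<forall>e\<in>T. \<forall>e'\<in>T. tail e = tail e' \<and> tail e \<in> U \<and> head e \<in> U \<and> head e' \<in> U \<longrightarrow> e = e'"
      proof (intro ballI impI)
        fix e1 e2 assume e12: "e1 \<in> T" "e2 \<in> T" and c: "tail e1 = tail e2 \<and> tail e1 \<in> U \<and> head e1 \<in> U \<and> head e2 \<in> U"
        have "e1 = nxU (tail e1)" using inU[OF e12(1)] c by simp
        moreover have "e2 = nxU (tail e2)" using inU[OF e12(2)] c by simp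
        ultimately show "e1 = e2" using c by simp
      qed
      have hU: "head e \<in> U" using True hh by simp
      show False using detB[OF TE pc fn e(1,2) neq ne[THEN conjunct2] hU x] .
    next
      case nU: False
      show False
      proof (cases "h \<in> B")
        case True
        have "e = pvB h" using inB[OF e(1)] hh True nU by simp
        moreover have "e' = pvB h" using inB[OF e(2)] hh True nU by simp
        ultimately show False using neq by simp
      next
        case nB: False
        show False
        proof (cases "h \<in> A")
          case True
          have "e = pvA h" using inA[OF e(1)] hh True by simp
          moreover have "e' = pvA h" using inA[OF e(2)] hh True by simp
          ultimately show False using neq by simp
        next
          case nA: False
          have hF: "h \<in> F" using inAll[OF e(1)] hh nU nB nA by simp
          have c1: "(hasF h \<and> e = pvF h) \<or> (\<not> hasF h \<and> ((e = pFA h \<and> tail e \<in> A) \<or> (e = pFB h \<and> tail e \<in> B)))"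
            using inF[OF e(1)] hh hF by simp
          have c2: "(hasF h \<and> e' = pvF h) \<or> (\<not> hasF h \<and> ((e' = pFA h \<and> tail e' \<in> A) \<or> (e' = pFB h \<and> tail e' \<in> B)))"
            using inF[OF e(2)] hh hF by simp
          show False
          proof (cases "hasF h")
            case True
            then have "e = pvF h" "e' = pvF h" using c1 c2 by auto
            then show False using neq by simp
          next
            case nh: False
            have pcA: "\<forall>e\<in>T. head e \<in> A \<longrightarrow> tail e \<in> A" using inA by blast
            have pcB: "\<forall>e\<in>T. head e \<in> B \<union> U \<longrightarrow> tail e \<in> B \<union> U"
            proof (intro ballI impI)
              fix e1 assume e1: "e1 \<in> T" "head e1 \<in> B \<union> U"
              show "tail e1 \<in> B \<union> U"
              proof (cases "head e1 \<in> U")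
                case True then show ?thesis using inU[OF e1(1)] by simp
              next
                case False
                then show ?thesis using inB[OF e1(1)] e1(2) by simp
              qed
            qed
            have xAB: "x \<in> A \<and> x \<in> B \<union> U" if t1: "tail e \<in> A" and t2: "tail e' \<in> B"
              and x1: "(x, tail e) \<in> (arcs T tail head)\<^sup>*" and x2: "(x, tail e') \<in> (arcs T tail head)\<^sup>*" for e e' x
            proof
              show "x \<in> A" using pred_closed[OF pcA x1 t1] .
              have "tail e' \<in> B \<union> U" using t2 by simp
              then show "x \<in> B \<union> U" using pred_closed[OF pcB x2] by simp
            qed
            have nAU: "x \<notin> A" if "x \<in> B \<union> U" for x using that dAB1 dUA by blast
            have "(tail e \<in> A \<and> tail e' \<in> B) \<or> (tail e' \<in> A \<and> tail e \<in> B)"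
              using c1 c2 nh neq by auto
            then show False
            proof
              assume "tail e \<in> A \<and> tail e' \<in> B"
              then show False using xAB[of e e' x] x nAU by blast
            next
              assume "tail e' \<in> A \<and> tail e \<in> B"
              then show False using xAB[of e' e x] x nAU by blast
            qed
          qed
        qed
      qed
    qed
  qed
  have reach1: "(u, v) \<in> (arcs T tail head)\<^sup>*" if "u \<in> U" for u
  proof (rule intree_reach[OF TE _ that])
    show "\<forall>u\<in>U - {v}. \<exists>e\<in>T. tail e = u \<and> head e \<in> U"
    proof
      fix u assume u: "u \<in> U - {v}"
      have "nxU u \<in> T" using nxU[OF u] u unfolding T_def by auto
      then show "\<exists>e\<in>T. tail e = u \<and> head e \<in> U" using nxU[OF u] by blast
    qed
  qed
  have reachB: "(v, w) \<in> (arcs T tail head)\<^sup>*" if "w \<in> B" for w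
  proof (rule outtree_reach[OF TE _ that])
    show "\<forall>u\<in>B - {v}. \<exists>e\<in>T. head e = u \<and> tail e \<in> B"
    proof
      fix u assume u: "u \<in> B - {v}"
      have "pvB u \<in> T" using pvB[OF u] u unfolding T_def by auto
      then show "\<exists>e\<in>T. head e = u \<and> tail e \<in> B" using pvB[OF u] by blast
    qed
  qed
  have reachA: "(s k, w) \<in> (arcs T tail head)\<^sup>*" if "w \<in> A" for w
  proof (rule outtree_reach[OF TE _ that])
    show "\<forall>u\<in>A - {s k}. \<exists>e\<in>T. head e = u \<and> tail e \<in> A"
    proof
      fix u assume u: "u \<in> A - {s k}"
      have "pvA u \<in> T" using pvA[OF u] u unfolding T_def by auto
      then show "\<exists>e\<in>T. head e = u \<and> tail e \<in> A" using pvA[OF u] by blast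
    qed
  qed
  have reachF: "f \<in> F \<longrightarrow> (v, f) \<in> (arcs T tail head)\<^sup>* \<and> (s k, f) \<in> (arcs T tail head)\<^sup>*" for f
  proof (induction f rule: wf_induct[OF wf_rE])
    case (1 f)
    show ?case
    proof
      assume f: "f \<in> F"
      show "(v, f) \<in> (arcs T tail head)\<^sup>* \<and> (s k, f) \<in> (arcs T tail head)\<^sup>*"
      proof (cases "hasF f")
        case True
        let ?e = "pvF f"
        have e: "?e \<in> E" "head ?e = f" "tail ?e \<in> F" using pvF[OF True] by auto
        have eT: "?e \<in> T" using e f True unfolding T_def by auto
        have a: "(tail ?e, f) \<in> arcs T tail head" using eT e unfolding arcs_iff by blast
        have "(tail ?e, f) \<in> rE" using e unfolding arcs_iff by blast
        then have "(v, tail ?e) \<in> (arcs T tail head)\<^sup>* \<and> (s k, tail ?e) \<in> (arcs T tail head)\<^sup>*"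
          using 1[rule_format] e(3) by blast
        then show ?thesis using a by (meson rtrancl_into_rtrancl)
      next
        case False
        have e1: "pFA f \<in> E" "head (pFA f) = f" "tail (pFA f) \<in> A" using pFA[OF f False] by auto
        have e2: "pFB f \<in> E" "head (pFB f) = f" "tail (pFB f) \<in> B" using pFB[OF f False] by auto
        have t1: "pFA f \<in> T" using e1 f False unfolding T_def by auto
        have t2: "pFB f \<in> T" using e2 f False unfolding T_def by auto
        have a1: "(tail (pFA f), f) \<in> arcs T tail head" using t1 e1 unfolding arcs_iff by blast
        have a2: "(tail (pFB f), f) \<in> arcs T tail head" using t2 e2 unfolding arcs_iff by blast
        have "(s k, f) \<in> (arcs T tail head)\<^sup>*" using reachA[OF e1(3)] a1 by (rule rtrancl_into_rtrancl)
        moreover have "(v, f) \<in> (arcs T tail head)\<^sup>*" using reachB[OF e2(3)] a2 by (rule rtrancl_into_rtrancl)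
        ultimately show ?thesis by simp
      qed
    qed
  qed
  have RR: "\<forall>i<3. \<forall>j<3. (s i, t j) \<in> (arcs T tail head)\<^sup>*"
  proof (intro allI impI)
    fix i j :: nat assume ij: "i < 3" "j < 3"
    have tF: "t j \<in> F" using tR conn ij unfolding F_def R_def D_def by simp
    show "(s i, t j) \<in> (arcs T tail head)\<^sup>*"
    proof (cases "i = k")
      case True
      then show ?thesis using reachF tF by blast
    next
      case False
      then have "s i \<in> U" using sU ij unfolding U_def by simp
      then show ?thesis using reach1 reachF tF by (meson rtrancl_trans)
    qed
  qed
  show ?thesis using GL[OF TE srcin sinj ts ND RR] .
qed

end


context netw
begin

lemma noout:
  assumes nout: "\<forall>e\<in>E. tail e \<noteq> x" and "(x, y) \<in> rE\<^sup>*"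
  shows "x = y"
proof (rule ccontr)
  assume "x \<noteq> y"
  then obtain e where "e\<in>E" "tail e = x" using first_edge[OF assms(2)] by blast
  then show False using nout by blast
qed

lemma case32:
  fixes s t :: "nat \<Rightarrow> 'v" and v :: 'v and m :: nat
  assumes srcin: "\<forall>i<3. \<forall>e\<in>E. head e \<noteq> s i"
    and sinj: "inj_on s {..<3}"
    and ts: "\<forall>i<3. \<forall>j<3. t j \<noteq> s i"
    and m: "m < 3"
    and vtm: "(v, t m) \<notin> rE\<^sup>*"
    and tout: "\<forall>e\<in>E. tail e \<noteq> t m"
    and sU: "\<forall>i<3. (s i, v) \<in> rE\<^sup>*"
    and tR: "\<forall>j<3. j \<noteq> m \<longrightarrow> (v, t j) \<in> rE\<^sup>*"
    and conn: "\<forall>i<3. (s i, t m) \<in> rE\<^sup>*"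
  shows "\<exists>(alpha :: 'e \<Rightarrow> 'a::field) beta msg.
           is_linear_code E tail head 3 s alpha beta msg \<and>
           (\<forall>j<3. recovers_sum E head 3 msg (t j))"
proof -
  define U where "U = {u. (u,v) \<in> rE\<^sup>*}"
  define R where "R = {w. (v,w) \<in> rE\<^sup>*}"
  define W where "W = {w. (w, t m) \<in> rE\<^sup>*}"
  define G where "G = U \<inter> W"
  define A where "A = W - U"
  define hasG where "hasG u \<longleftrightarrow> (\<exists>e. e\<in>E \<and> tail e = u \<and> head e \<in> G)" for u
  define Sp where "Sp = {w\<in>G. \<not> hasG w}"
  define nxU where "nxU u = (if u \<in> G \<and> hasG u then (SOME e. e\<in>E \<and> tail e = u \<and> head e \<in> G)
                              else (SOME e. e\<in>E \<and> tail e = u \<and> head e \<in> U))" for u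
  define spA where "spA w = (SOME e. e\<in>E \<and> tail e = w \<and> head e \<in> A)" for w
  define nxA where "nxA w = (SOME e. e\<in>E \<and> tail e = w \<and> head e \<in> A)" for w
  define pvR where "pvR w = (SOME e. e\<in>E \<and> head e = w \<and> tail e \<in> R)" for w
  have UR: "x = v" if "x \<in> U" "x \<in> R" for x
    using antisym_reach that unfolding U_def R_def by blast
  have RW: "x \<notin> W" if "x \<in> R" for x
  proof
    assume "x \<in> W"
    then have "(v, t m) \<in> rE\<^sup>*" using that unfolding W_def R_def by (meson rtrancl_trans mem_Collect_eq)
    then show False using vtm by blast
  qed
  have vU: "v \<in> U" unfolding U_def by simp
  have vR: "v \<in> R" unfolding R_def by simp
  have vG: "v \<notin> G" using RW[OF vR] unfolding G_def by simp
  have SpG: "Sp \<subseteq> G" unfolding Sp_def by blast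
  have GU: "G \<subseteq> U" unfolding G_def by blast
  have tmA: "t m \<in> A"
  proof -
    have "t m \<notin> U"
    proof
      assume "t m \<in> U"
      then have "t m = v" using noout[OF tout] unfolding U_def by blast
      then show False using vtm by simp
    qed
    then show ?thesis unfolding A_def W_def by simp
  qed
  have AU: "x \<notin> U" if "x \<in> A" for x using that unfolding A_def by simp
  have AR: "x \<notin> R" if "x \<in> A" for x using that RW unfolding A_def by blast
  have nxU: "nxU u \<in> E \<and> tail (nxU u) = u \<and> head (nxU u) \<in> U \<and> (u \<in> G \<longrightarrow> (head (nxU u) \<in> G \<longleftrightarrow> hasG u))"
    if u: "u \<in> U - {v}" for u
  proof (cases "u \<in> G \<and> hasG u")
    case True
    then have "\<exists>e. e\<in>E \<and> tail e = u \<and> head e \<in> G" unfolding hasG_def by blast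
    then have "(SOME e. e\<in>E \<and> tail e = u \<and> head e \<in> G) \<in> E \<and> tail (SOME e. e\<in>E \<and> tail e = u \<and> head e \<in> G) = u
        \<and> head (SOME e. e\<in>E \<and> tail e = u \<and> head e \<in> G) \<in> G" by (rule someI_ex)
    then show ?thesis unfolding nxU_def using True GU by auto
  next
    case False
    have "\<exists>e. e\<in>E \<and> tail e = u \<and> head e \<in> U"
      using first_edge[of u v] u unfolding U_def by blast
    then have "(SOME e. e\<in>E \<and> tail e = u \<and> head e \<in> U) \<in> E \<and> tail (SOME e. e\<in>E \<and> tail e = u \<and> head e \<in> U) = u
        \<and> head (SOME e. e\<in>E \<and> tail e = u \<and> head e \<in> U) \<in> U" by (rule someI_ex)
    moreover have "nxU u = (SOME e. e\<in>E \<and> tail e = u \<and> head e \<in> U)" unfolding nxU_def using False by (simp only: if_False)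
    ultimately have p: "nxU u \<in> E \<and> tail (nxU u) = u \<and> head (nxU u) \<in> U" by simp
    have "u \<in> G \<longrightarrow> (head (nxU u) \<in> G \<longleftrightarrow> hasG u)"
    proof
      assume "u \<in> G"
      then have "\<not> hasG u" using False by simp
      then have "head (nxU u) \<notin> G" using p unfolding hasG_def by blast
      then show "head (nxU u) \<in> G \<longleftrightarrow> hasG u" using \<open>\<not> hasG u\<close> by simp
    qed
    then show ?thesis using p by simp
  qed
  have spA: "spA w \<in> E \<and> tail (spA w) = w \<and> head (spA w) \<in> A" if w: "w \<in> Sp" for w
  proof -
    have wG: "w \<in> G" "\<not> hasG w" using w unfolding Sp_def by auto
    have "w \<noteq> t m" using wG tmA GU AU by blast
    then obtain e where e: "e\<in>E" "tail e = w" "(head e, t m) \<in> rE\<^sup>*"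
      using first_edge[of w "t m"] wG unfolding G_def W_def by blast
    have "head e \<notin> U"
    proof
      assume "head e \<in> U"
      then have "head e \<in> G" using e(3) unfolding G_def W_def by simp
      then show False using wG(2) e unfolding hasG_def by blast
    qed
    then have "\<exists>e. e\<in>E \<and> tail e = w \<and> head e \<in> A" using e unfolding A_def W_def by blast
    then show ?thesis unfolding spA_def by (rule someI_ex)
  qed
  have nxA: "nxA w \<in> E \<and> tail (nxA w) = w \<and> head (nxA w) \<in> A" if w: "w \<in> A - {t m}" for w
  proof -
    obtain e where e: "e\<in>E" "tail e = w" "(head e, t m) \<in> rE\<^sup>*"
      using first_edge[of w "t m"] w unfolding A_def W_def by blast
    have "head e \<notin> U"
    proof
      assume "head e \<in> U"
      moreover have "(w, head e) \<in> rE" using e unfolding arcs_iff by blast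
      ultimately have "w \<in> U" unfolding U_def by (simp add: converse_rtrancl_into_rtrancl)
      then show False using w AU by blast
    qed
    then have "\<exists>e. e\<in>E \<and> tail e = w \<and> head e \<in> A" using e unfolding A_def W_def by blast
    then show ?thesis unfolding nxA_def by (rule someI_ex)
  qed
  have pvR: "pvR w \<in> E \<and> head (pvR w) = w \<and> tail (pvR w) \<in> R" if "w \<in> R - {v}" for w
  proof -
    have "\<exists>e. e\<in>E \<and> head e = w \<and> tail e \<in> R"
      using last_edge[of v w] that unfolding R_def by blast
    then show ?thesis unfolding pvR_def by (rule someI_ex)
  qed
  define T where "T = {e\<in>E. (tail e \<in> U-{v} \<and> e = nxU (tail e))
      \<or> (tail e \<in> Sp \<and> e = spA (tail e))
      \<or> (tail e \<in> A-{t m} \<and> e = nxA (tail e))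
      \<or> (head e \<in> R-{v} \<and> e = pvR (head e))}"
  have TE: "T \<subseteq> E" unfolding T_def by blast
  have Tcases: "(tail e \<in> U-{v} \<and> e = nxU (tail e) \<and> head e \<in> U)
      \<or> (tail e \<in> Sp \<and> e = spA (tail e) \<and> head e \<in> A)
      \<or> (tail e \<in> A-{t m} \<and> e = nxA (tail e) \<and> head e \<in> A)
      \<or> (head e \<in> R-{v} \<and> e = pvR (head e) \<and> tail e \<in> R)"
    if "e \<in> T" for e
  proof -
    have c: "(tail e \<in> U-{v} \<and> e = nxU (tail e))
      \<or> (tail e \<in> Sp \<and> e = spA (tail e))
      \<or> (tail e \<in> A-{t m} \<and> e = nxA (tail e))
      \<or> (head e \<in> R-{v} \<and> e = pvR (head e))" using that unfolding T_def by blast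
    then show ?thesis
    proof (elim disjE)
      assume a: "tail e \<in> U-{v} \<and> e = nxU (tail e)"
      then have "head e \<in> U" using nxU[of "tail e"] by simp
      then show ?thesis using a by blast
    next
      assume a: "tail e \<in> Sp \<and> e = spA (tail e)"
      then have "head e \<in> A" using spA[of "tail e"] by simp
      then show ?thesis using a by blast
    next
      assume a: "tail e \<in> A-{t m} \<and> e = nxA (tail e)"
      then have "head e \<in> A" using nxA[of "tail e"] by simp
      then show ?thesis using a by blast
    next
      assume a: "head e \<in> R-{v} \<and> e = pvR (head e)"
      then have "tail e \<in> R" using pvR[of "head e"] by simp
      then show ?thesis using a by blast
    qed
  qed
  have SpU: "x \<in> U" if "x \<in> Sp" for x using that SpG GU by blast
  have inU: "e = nxU (tail e) \<and> tail e \<in> U - {v}" if "e \<in> T" "head e \<in> U" for e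
    using Tcases[OF that(1)] that(2) AU UR by (elim disjE) auto
  have inA: "(tail e \<in> Sp \<and> e = spA (tail e)) \<or> (tail e \<in> A-{t m} \<and> e = nxA (tail e))" if "e \<in> T" "head e \<in> A" for e
    using Tcases[OF that(1)] that(2) AU AR by (elim disjE) auto
  have inR: "e = pvR (head e)" if "e \<in> T" "head e \<in> R" "head e \<notin> U" for e
    using Tcases[OF that(1)] that(2,3) AR by (elim disjE) auto
  have outA: "e = nxA (tail e) \<and> head e \<in> A" if "e \<in> T" "tail e \<in> A" for e
    using Tcases[OF that(1)] that(2) AU AR SpU by (elim disjE) auto
  have outSp: "e = spA (tail e)" if "e \<in> T" "tail e \<in> Sp" "head e \<in> A" for e
    using Tcases[OF that(1)] that(2,3) AU AR SpU by (elim disjE) auto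
  have inAll: "head e \<in> U \<or> head e \<in> A \<or> head e \<in> R" if "e \<in> T" for e
    using Tcases[OF that] by (elim disjE) auto
  have nxUT: "nxU u \<in> T" if "u \<in> U - {v}" for u using nxU[OF that] that unfolding T_def by auto
  define Tr where "Tr = arcs T tail head"
  define RU where "RU = {(p,q). (p,q) \<in> Tr \<and> p \<in> U \<and> q \<in> U}"
  define RA where "RA = {(p,q). (p,q) \<in> Tr \<and> p \<in> A}"
  have fnU: "q = q'" if h1: "(p,q) \<in> RU" and h2: "(p,q') \<in> RU" for p q q'
  proof -
    obtain e1 where e1: "e1 \<in> T" "tail e1 = p" "head e1 = q" "q \<in> U" using h1 unfolding RU_def Tr_def arcs_iff by blast
    obtain e2 where e2: "e2 \<in> T" "tail e2 = p" "head e2 = q'" "q' \<in> U" using h2 unfolding RU_def Tr_def arcs_iff by blast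
    have "e1 = nxU p" using inU[OF e1(1)] e1 by simp
    moreover have "e2 = nxU p" using inU[OF e2(1)] e2 by simp
    ultimately show ?thesis using e1 e2 by simp
  qed
  have fnA: "q = q'" if h1: "(p,q) \<in> RA" and h2: "(p,q') \<in> RA" for p q q'
  proof -
    obtain e1 where e1: "e1 \<in> T" "tail e1 = p" "head e1 = q" "p \<in> A" using h1 unfolding RA_def Tr_def arcs_iff by blast
    obtain e2 where e2: "e2 \<in> T" "tail e2 = p" "head e2 = q'" using h2 unfolding RA_def Tr_def arcs_iff by blast
    have "e1 = nxA p" using outA[OF e1(1)] e1 by simp
    moreover have "e2 = nxA p" using outA[OF e2(1)] e2 e1(4) by simp
    ultimately show ?thesis using e1 e2 by simp
  qed
  have RAT: "RA \<subseteq> arcs T tail head" unfolding RA_def Tr_def by blast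
  have RUT: "RU \<subseteq> arcs T tail head" unfolding RU_def Tr_def by blast
  have Adiam: False if e: "e \<in> T" "e' \<in> T" "e \<noteq> e'" "head e = head e'" "tail e \<in> A" "tail e' \<in> A"
    and b: "(b, tail e) \<in> RA\<^sup>*" "(b, tail e') \<in> RA\<^sup>*" for e e' b
  proof -
    have neq: "tail e \<noteq> tail e'"
    proof
      assume "tail e = tail e'"
      then show False using outA[OF e(1) e(5)] outA[OF e(2) e(6)] e(3) by simp
    qed
    have h1: "(tail e, head e) \<in> RA" "(tail e', head e') \<in> RA"
      unfolding RA_def Tr_def arcs_iff using e by auto
    have fe: "\<And>q. (tail e, q) \<in> RA \<Longrightarrow> q = head e" using fnA h1(1) by blast
    have fe': "\<And>q. (tail e', q) \<in> RA \<Longrightarrow> q = head e'" using fnA h1(2) by blast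
    have "(tail e, tail e') \<in> RA\<^sup>* \<or> (tail e', tail e) \<in> RA\<^sup>*"
      by (rule func_comparable[OF _ b(1) b(2)], rule fnA, assumption+)
    then show False
    proof
      assume "(tail e, tail e') \<in> RA\<^sup>*"
      then show False using chain_contra[OF RAT TE e(1,2,4) _ neq fe] by blast
    next
      assume "(tail e', tail e) \<in> RA\<^sup>*"
      then show False using chain_contra[OF RAT TE e(2,1) e(4)[symmetric] _ neq[symmetric] fe'] by blast
    qed
  qed
  have Dec: "(y \<in> U \<longrightarrow> (x,y) \<in> RU\<^sup>*) \<and> (y \<in> A \<longrightarrow> (\<exists>w\<in>Sp. (x,w) \<in> RU\<^sup>* \<and> (head (spA w), y) \<in> RA\<^sup>*))"
    if x: "x \<in> U" and p: "(x,y) \<in> Tr\<^sup>*" for x y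
    using p
  proof (induction rule: rtrancl_induct)
    case base
    then show ?case using x AU by auto
  next
    case (step y c)
    obtain e0 where e0: "e0 \<in> T" "tail e0 = y" "head e0 = c" using step.hyps(2) unfolding Tr_def arcs_iff by blast
    have cU: "(x,c) \<in> RU\<^sup>*" if "c \<in> U"
    proof -
      have "e0 = nxU y \<and> y \<in> U - {v}" using inU[OF e0(1)] e0 that by simp
      then have yU: "y \<in> U" by simp
      then have "(x,y) \<in> RU\<^sup>*" using step.IH by simp
      moreover have "(y,c) \<in> RU" unfolding RU_def using step.hyps(2) yU that by simp
      ultimately show ?thesis by (rule rtrancl_into_rtrancl)
    qed
    have cA: "\<exists>w\<in>Sp. (x,w) \<in> RU\<^sup>* \<and> (head (spA w), c) \<in> RA\<^sup>*" if cA: "c \<in> A"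
    proof -
      have "(y \<in> Sp \<and> e0 = spA y) \<or> (y \<in> A-{t m} \<and> e0 = nxA y)" using inA[OF e0(1)] e0 cA by simp
      then show ?thesis
      proof
        assume a: "y \<in> Sp \<and> e0 = spA y"
        then have "(x,y) \<in> RU\<^sup>*" using step.IH SpU by blast
        moreover have "head (spA y) = c" using a e0 by simp
        ultimately show ?thesis using a by blast
      next
        assume a: "y \<in> A-{t m} \<and> e0 = nxA y"
        then obtain w where w: "w\<in>Sp" "(x,w) \<in> RU\<^sup>*" "(head (spA w), y) \<in> RA\<^sup>*" using step.IH by blast
        have "(y,c) \<in> RA" unfolding RA_def using step.hyps(2) a by simp
        then have "(head (spA w), c) \<in> RA\<^sup>*" using w(3) by (simp add: rtrancl_into_rtrancl)
        then show ?thesis using w by blast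
      qed
    qed
    show ?case using cU cA by blast
  qed
  have UG: "y \<notin> G" if "(c,y) \<in> RU\<^sup>*" "c \<in> U" "c \<notin> G" for c y
    using that(1)
  proof (induction rule: rtrancl_induct)
    case base then show ?case using that by simp
  next
    case (step y z)
    show ?case
    proof
      assume zG: "z \<in> G"
      have yU: "y \<in> U" and yz: "(y,z) \<in> Tr" using step.hyps(2) unfolding RU_def by auto
      have "(y,z) \<in> rE" using yz arcs_mono[OF TE] unfolding Tr_def by blast
      then have "y \<in> W" using zG unfolding G_def W_def by (simp add: converse_rtrancl_into_rtrancl)
      then show False using yU step.IH unfolding G_def by simp
    qed
  qed
  have split_uniq: "w1 = w2" if w: "w1 \<in> Sp" "w2 \<in> Sp" "(x,w1) \<in> RU\<^sup>*" "(x,w2) \<in> RU\<^sup>*" for x w1 w2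
  proof -
    have one: False if a: "a \<in> Sp" "b \<in> Sp" "(a,b) \<in> RU\<^sup>*" "a \<noteq> b" for a b
    proof -
      have tc: "(a,b) \<in> RU\<^sup>+" using rtranclD[OF a(3)] a(4) by blast
      obtain c where c: "(a,c) \<in> RU" "(c,b) \<in> RU\<^sup>*" using tranclD[OF tc] by blast
      have aG: "a \<in> G" "\<not> hasG a" using a unfolding Sp_def by auto
      have aUv: "a \<in> U - {v}" using aG vG GU by auto
      have "(a, head (nxU a)) \<in> RU"
        unfolding RU_def Tr_def arcs_iff using nxUT[OF aUv] nxU[OF aUv] aUv by auto
      then have "c = head (nxU a)" using fnU c(1) by blast
      moreover have "head (nxU a) \<notin> G" using nxU[OF aUv] aG by simp
      moreover have "head (nxU a) \<in> U" using nxU[OF aUv] by simp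
      ultimately have "b \<notin> G" using UG c(2) by blast
      then show False using a(2) SpG by blast
    qed
    have "(w1,w2) \<in> RU\<^sup>* \<or> (w2,w1) \<in> RU\<^sup>*"
      by (rule func_comparable[OF _ w(3) w(4)], rule fnU, assumption+)
    then show ?thesis using one w(1,2) by blast
  qed
  have pcUA: "\<forall>e\<in>T. head e \<in> U \<union> A \<longrightarrow> tail e \<in> U \<union> A"
  proof (intro ballI impI)
    fix e1 assume e1: "e1 \<in> T" "head e1 \<in> U \<union> A"
    show "tail e1 \<in> U \<union> A"
    proof (cases "head e1 \<in> U")
      case True then show ?thesis using inU[OF e1(1)] by simp
    next
      case False
      then have "head e1 \<in> A" using e1(2) by simp
      then show ?thesis using inA[OF e1(1)] SpU by blast
    qed
  qed
  have fcA: "\<forall>e\<in>T. tail e \<in> A \<longrightarrow> head e \<in> A" using outA by blast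
  have ND: "\<forall>e\<in>T. \<forall>e'\<in>T. e \<noteq> e' \<and> head e = head e' \<longrightarrow>
              (\<forall>x. (x, tail e) \<in> (arcs T tail head)\<^sup>* \<longrightarrow> (x, tail e') \<in> (arcs T tail head)\<^sup>* \<longrightarrow> False)"
  proof (intro ballI impI allI)
    fix e e' x assume e: "e\<in>T" "e'\<in>T" and ne: "e \<noteq> e' \<and> head e = head e'"
      and x: "(x, tail e) \<in> (arcs T tail head)\<^sup>*" "(x, tail e') \<in> (arcs T tail head)\<^sup>*"
    define h where "h = head e"
    have hh: "head e = h" "head e' = h" using ne unfolding h_def by auto
    have neq: "e \<noteq> e'" using ne by simp
    show False
    proof (cases "h \<in> U")
      case True
      have pc: "\<forall>e\<in>T. head e \<in> U \<longrightarrow> tail e \<in> U" using inU by blast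
      have fn: "\<forall>e\<in>T. \<forall>e'\<in>T. tail e = tail e' \<and> tail e \<in> U \<and> head e \<in> U \<and> head e' \<in> U \<longrightarrow> e = e'"
      proof (intro ballI impI)
        fix e1 e2 assume e12: "e1 \<in> T" "e2 \<in> T" and c: "tail e1 = tail e2 \<and> tail e1 \<in> U \<and> head e1 \<in> U \<and> head e2 \<in> U"
        have "e1 = nxU (tail e1)" using inU[OF e12(1)] c by simp
        moreover have "e2 = nxU (tail e2)" using inU[OF e12(2)] c by simp
        ultimately show "e1 = e2" using c by simp
      qed
      have hU: "head e \<in> U" using True hh by simp
      show False using detB[OF TE pc fn e(1,2) neq ne[THEN conjunct2] hU x] .
    next
      case nU: False
      show False
      proof (cases "h \<in> A")
        case False
        then have hR: "h \<in> R" using inAll[OF e(1)] hh nU by simp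
        have "e = pvR h" using inR[OF e(1)] hh hR nU by simp
        moreover have "e' = pvR h" using inR[OF e(2)] hh hR nU by simp
        ultimately show False using neq by simp
      next
        case hA: True
        have te: "(tail e \<in> Sp \<and> e = spA (tail e)) \<or> (tail e \<in> A-{t m} \<and> e = nxA (tail e))" using inA[OF e(1)] hh hA by simp
        have te': "(tail e' \<in> Sp \<and> e' = spA (tail e')) \<or> (tail e' \<in> A-{t m} \<and> e' = nxA (tail e'))" using inA[OF e(2)] hh hA by simp
        have tUA: "tail e \<in> U \<union> A" using te SpU by blast
        have xUA: "x \<in> U \<union> A" using pred_closed[OF pcUA x(1) tUA] .
        show False
        proof (cases "x \<in> A")
          case True
          have p1: "(x, tail e) \<in> RA\<^sup>* \<and> tail e \<in> A" using fwd_closed_path[OF fcA x(1) True] unfolding RA_def Tr_def .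
          have p2: "(x, tail e') \<in> RA\<^sup>* \<and> tail e' \<in> A" using fwd_closed_path[OF fcA x(2) True] unfolding RA_def Tr_def .
          show False using Adiam[OF e(1,2) neq ne[THEN conjunct2]] p1 p2 by blast
        next
          case False
          then have xU: "x \<in> U" using xUA by simp
          have wt: "\<exists>w\<in>Sp. (x,w) \<in> RU\<^sup>* \<and> ((ta = w \<and> h = head (spA w)) \<or> (ta \<in> A \<and> (head (spA w), ta) \<in> RA\<^sup>*))"
            if ta: "(ta \<in> Sp \<and> ea = spA ta) \<or> (ta \<in> A-{t m} \<and> ea = nxA ta)" and hea: "head ea = h"
              and xta: "(x, ta) \<in> Tr\<^sup>*" for ta ea
            using ta
          proof
            assume a: "ta \<in> Sp \<and> ea = spA ta"
            then have "(x, ta) \<in> RU\<^sup>*" using Dec[OF xU xta] SpU by blast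
            then show ?thesis using a hea by blast
          next
            assume a: "ta \<in> A-{t m} \<and> ea = nxA ta"
            then obtain w where "w\<in>Sp" "(x,w) \<in> RU\<^sup>*" "(head (spA w), ta) \<in> RA\<^sup>*" using Dec[OF xU xta] by blast
            then show ?thesis using a by blast
          qed
          obtain w1 where w1: "w1\<in>Sp" "(x,w1) \<in> RU\<^sup>*" "(tail e = w1 \<and> h = head (spA w1)) \<or> (tail e \<in> A \<and> (head (spA w1), tail e) \<in> RA\<^sup>*)"
            using wt[OF te hh(1)] x(1) unfolding Tr_def by blast
          obtain w2 where w2: "w2\<in>Sp" "(x,w2) \<in> RU\<^sup>*" "(tail e' = w2 \<and> h = head (spA w2)) \<or> (tail e' \<in> A \<and> (head (spA w2), tail e') \<in> RA\<^sup>*)"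
            using wt[OF te' hh(2)] x(2) unfolding Tr_def by blast
          have w12: "w1 = w2" using split_uniq[OF w1(1) w2(1) w1(2) w2(2)] .
          define b where "b = head (spA w1)"
          have cyc: False if "ta \<in> A" "(b, ta) \<in> RA\<^sup>*" "ea \<in> T" "tail ea = ta" "head ea = b" for ta ea
          proof -
            have "(b, ta) \<in> rE\<^sup>*" using that(2) RAT arcs_mono[OF TE] rtrancl_mono by blast
            moreover have "(ta, b) \<in> rE" using that(3,4,5) TE unfolding arcs_iff by blast
            ultimately have "(b,b) \<in> rE\<^sup>+" by (simp add: rtrancl_into_trancl1)
            then show False by (rule no_cycle)
          qed
          show False
          proof (cases "tail e = w1 \<and> h = head (spA w1)")
            case c1: True
            show False
            proof (cases "tail e' = w2 \<and> h = head (spA w2)")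
              case True
              have "tail e = tail e'" using c1 True w12 by simp
              moreover have "tail e \<in> Sp" "tail e' \<in> Sp" using c1 True w1(1) w2(1) by auto
              ultimately have "e = e'" using te te' AU SpU by auto
              then show False using neq by simp
            next
              case False
              then have "tail e' \<in> A" "(b, tail e') \<in> RA\<^sup>*" using w2(3) w12 unfolding b_def by auto
              then show False using cyc[of "tail e'" e'] e(2) hh c1 unfolding b_def by simp
            qed
          next
            case c1: False
            then have a1: "tail e \<in> A" "(b, tail e) \<in> RA\<^sup>*" using w1(3) unfolding b_def by auto
            show False
            proof (cases "tail e' = w2 \<and> h = head (spA w2)")
              case True
              then show False using cyc[of "tail e" e] a1 e(1) hh w12 unfolding b_def by simp
            next
              case False
              then have "tail e' \<in> A" "(b, tail e') \<in> RA\<^sup>*" using w2(3) w12 unfolding b_def by auto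
              then show False using Adiam[OF e(1,2) neq ne[THEN conjunct2] a1(1) _ a1(2)] by blast
            qed
          qed
        qed
      qed
    qed
  qed
  have reach1: "(u, v) \<in> (arcs T tail head)\<^sup>*" if "u \<in> U" for u
  proof (rule intree_reach[OF TE _ that])
    show "\<forall>u\<in>U - {v}. \<exists>e\<in>T. tail e = u \<and> head e \<in> U"
      using nxUT nxU by blast
  qed
  have reachR: "(v, w) \<in> (arcs T tail head)\<^sup>*" if "w \<in> R" for w
  proof (rule outtree_reach[OF TE _ that])
    show "\<forall>u\<in>R - {v}. \<exists>e\<in>T. head e = u \<and> tail e \<in> R"
    proof
      fix u assume u: "u \<in> R - {v}"
      have "pvR u \<in> T" using pvR[OF u] u unfolding T_def by auto
      then show "\<exists>e\<in>T. head e = u \<and> tail e \<in> R" using pvR[OF u] by blast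
    qed
  qed
  have reachA: "(u, t m) \<in> (arcs T tail head)\<^sup>*" if "u \<in> A" for u
  proof (rule intree_reach[OF TE _ that])
    show "\<forall>u\<in>A - {t m}. \<exists>e\<in>T. tail e = u \<and> head e \<in> A"
    proof
      fix u assume u: "u \<in> A - {t m}"
      have "nxA u \<in> T" using nxA[OF u] u unfolding T_def by auto
      then show "\<exists>e\<in>T. tail e = u \<and> head e \<in> A" using nxA[OF u] by blast
    qed
  qed
  have reachG: "g \<in> G \<longrightarrow> (\<exists>w\<in>Sp. (g, w) \<in> (arcs T tail head)\<^sup>*)" for g
  proof (induction g rule: wf_induct[OF wf_conv])
    case (1 g)
    show ?case
    proof
      assume g: "g \<in> G"
      show "\<exists>w\<in>Sp. (g, w) \<in> (arcs T tail head)\<^sup>*"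
      proof (cases "hasG g")
        case False
        then have "g \<in> Sp" using g unfolding Sp_def by simp
        then show ?thesis by blast
      next
        case True
        have gUv: "g \<in> U - {v}" using g vG GU by auto
        let ?e = "nxU g"
        have hG: "head ?e \<in> G" using nxU[OF gUv] g True by simp
        have a: "(g, head ?e) \<in> arcs T tail head" using nxUT[OF gUv] nxU[OF gUv] unfolding arcs_iff by blast
        have "(g, head ?e) \<in> rE" using nxU[OF gUv] unfolding arcs_iff by blast
        then have "(head ?e, g) \<in> rE\<inverse>" by simp
        then obtain w where "w\<in>Sp" "(head ?e, w) \<in> (arcs T tail head)\<^sup>*" using 1[rule_format] hG by blast
        then show ?thesis using a by (meson converse_rtrancl_into_rtrancl)
      qed
    qed
  qed
  have RR: "\<forall>i<3. \<forall>j<3. (s i, t j) \<in> (arcs T tail head)\<^sup>*"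
  proof (intro allI impI)
    fix i j :: nat assume ij: "i < 3" "j < 3"
    have siU: "s i \<in> U" using sU ij unfolding U_def by simp
    show "(s i, t j) \<in> (arcs T tail head)\<^sup>*"
    proof (cases "j = m")
      case True
      have "s i \<in> G" using siU conn ij unfolding G_def W_def by simp
      then obtain w where w: "w\<in>Sp" "(s i, w) \<in> (arcs T tail head)\<^sup>*" using reachG by blast
      have sT: "spA w \<in> T" using spA[OF w(1)] w(1) unfolding T_def by auto
      have a: "(w, head (spA w)) \<in> arcs T tail head" using sT spA[OF w(1)] unfolding arcs_iff by blast
      have "(head (spA w), t m) \<in> (arcs T tail head)\<^sup>*" using reachA spA[OF w(1)] by blast
      then have "(w, t m) \<in> (arcs T tail head)\<^sup>*" using a by (meson converse_rtrancl_into_rtrancl)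
      then show ?thesis using w(2) True by (meson rtrancl_trans)
    next
      case False
      then have "t j \<in> R" using tR ij unfolding R_def by simp
      then show ?thesis using reach1[OF siU] reachR by (meson rtrancl_trans)
    qed
  qed
  show ?thesis using GL[OF TE srcin sinj ts ND RR] .
qed

end


lemma card3_all:
  assumes "card {i::nat. i < 3 \<and> P i} = 3"
  shows "\<forall>i<3. P i"
proof -
  have "{i::nat. i < 3 \<and> P i} \<subseteq> {..<3}" by auto
  moreover have "card {..<3::nat} = 3" by simp
  ultimately have "{i::nat. i < 3 \<and> P i} = {..<3}"
    using assms card_subset_eq[of "{..<3::nat}" "{i::nat. i < 3 \<and> P i}"] by simp
  then show ?thesis by auto
qed

lemma card2_one:
  assumes "card {i::nat. i < 3 \<and> P i} = 2"
  shows "\<exists>k<3. \<not> P k \<and> (\<forall>i<3. i \<noteq> k \<longrightarrow> P i)"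
proof -
  let ?S = "{i::nat. i < 3 \<and> P i}"
  have sub: "?S \<subseteq> {..<3}" by auto
  have "card ({..<3} - ?S) = card {..<3::nat} - card ?S"
    using card_Diff_subset[OF finite_subset[OF sub] sub] by simp
  then have "card ({..<3} - ?S) = 1" using assms by simp
  then obtain k where k: "{..<3} - ?S = {k}" using card_1_singletonE by blast
  then have "k < 3" "\<not> P k" by auto
  moreover have "\<forall>i<3. i \<noteq> k \<longrightarrow> P i" using k by blast
  ultimately show ?thesis by blast
qed

theorem mainTheorem8:
  fixes V :: "'v set" and E :: "'e set" and tail head :: "'e \<Rightarrow> 'v"
    and s t :: "nat \<Rightarrow> 'v" and v :: 'v
  assumes net: "network V E tail head"
    and src: "\<forall>i<3. s i \<in> V" "inj_on s {..<3}" "\<forall>i<3. \<forall>e\<in>E. head e \<noteq> s i"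
    and trm: "\<forall>j<3. t j \<in> V" "inj_on t {..<3}" "\<forall>j<3. \<forall>e\<in>E. tail e \<noteq> t j"
    and conn: "\<forall>i<3. \<forall>j<3. has_path E tail head (s i) (t j)"
    and vV: "v \<in> V"
    and vtype: "(c_s E tail head 3 s v, c_t E tail head 3 t v) \<in> {(3,3), (2,3), (3,2)}"
  shows "\<exists>(alpha :: 'e \<Rightarrow> 'a::{field,finite}) beta msg.
           is_linear_code E tail head 3 s alpha beta msg \<and>
           (\<forall>j<3. recovers_sum E head 3 msg (t j))"
proof -
  have nw: "netw E tail head" using net unfolding network_def netw_def by blast
  interpret netw E tail head by (rule nw)
  have conn': "\<forall>i<3. \<forall>j<3. (s i, t j) \<in> (arcs E tail head)\<^sup>*" using conn unfolding has_path_def .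
  have ts: "\<forall>i<3. \<forall>j<3. t j \<noteq> s i"
  proof (intro allI impI notI)
    fix i j :: nat assume ij: "i < 3" "j < 3" and eq: "t j = s i"
    define i' where "i' = (if i = 0 then 1 else (0::nat))"
    have i': "i' < 3" "i' \<noteq> i" unfolding i'_def by auto
    have "(s i', s i) \<in> (arcs E tail head)\<^sup>*" using conn' i' ij eq by metis
    moreover have "\<forall>e\<in>E. head e \<noteq> s i" using src(3) ij by blast
    ultimately have "s i' = s i" using noin_src by blast
    then show False using src(2) i' ij unfolding inj_on_def by simp
  qed
  define cs where "cs = c_s E tail head 3 s v"
  define ct where "ct = c_t E tail head 3 t v"
  have csd: "cs = card {i. i < 3 \<and> (s i, v) \<in> (arcs E tail head)\<^sup>*}" unfolding cs_def c_s_def has_path_def ..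
  have ctd: "ct = card {j. j < 3 \<and> (v, t j) \<in> (arcs E tail head)\<^sup>*}" unfolding ct_def c_t_def has_path_def ..
  have "(cs, ct) \<in> {(3,3), (2,3), (3,2)}" using vtype unfolding cs_def ct_def .
  then consider "cs = 3" "ct = 3" | "cs = 2" "ct = 3" | "cs = 3" "ct = 2" by blast
  then show ?thesis
  proof cases
    case 1
    have sU: "\<forall>i<3. (s i, v) \<in> (arcs E tail head)\<^sup>*" using card3_all 1(1) csd by simp
    have tR: "\<forall>j<3. (v, t j) \<in> (arcs E tail head)\<^sup>*" using card3_all 1(2) ctd by simp
    show ?thesis using case33[OF src(3) src(2) ts sU tR] .
  next
    case 2
    obtain k where k: "k < 3" "(s k, v) \<notin> (arcs E tail head)\<^sup>*" "\<forall>i<3. i \<noteq> k \<longrightarrow> (s i, v) \<in> (arcs E tail head)\<^sup>*"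
      using card2_one[of "\<lambda>i. (s i, v) \<in> (arcs E tail head)\<^sup>*"] 2(1) csd by auto
    have tR: "\<forall>j<3. (v, t j) \<in> (arcs E tail head)\<^sup>*" using card3_all 2(2) ctd by simp
    have cn: "\<forall>j<3. (s k, t j) \<in> (arcs E tail head)\<^sup>*" using conn' k(1) by blast
    show ?thesis using case23[OF src(3) src(2) ts k(1) k(2) k(3) tR cn] .
  next
    case 3
    obtain m where m: "m < 3" "(v, t m) \<notin> (arcs E tail head)\<^sup>*" "\<forall>j<3. j \<noteq> m \<longrightarrow> (v, t j) \<in> (arcs E tail head)\<^sup>*"
      using card2_one[of "\<lambda>j. (v, t j) \<in> (arcs E tail head)\<^sup>*"] 3(2) ctd by auto
    have sU: "\<forall>i<3. (s i, v) \<in> (arcs E tail head)\<^sup>*" using card3_all 3(1) csd by simp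
    have tout: "\<forall>e\<in>E. tail e \<noteq> t m" using trm(3) m(1) by blast
    have cn: "\<forall>i<3. (s i, t m) \<in> (arcs E tail head)\<^sup>*" using conn' m(1) by blast
    show ?thesis using case32[OF src(3) src(2) ts m(1) m(2) tout sU m(3) cn] .
  qed
qed

end
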